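(* For every $p,q\in\mathbb{N}$ with $p/q\ge2$, we have $\overline{\xi_f}(E_{p/q})=p/q$.
   Context: For $p,q\in\mathbb{N}$ with $p/q\ge2$, the fraction graph $E_{p/q}$ has vertex set $\mathbb{Z}_p=\{0,1,\dots,p-1\}$, and distinct vertices $i,j$ are adjacent iff their cyclic distance $\min(|i-j|, p-|i-j|)$ is strictly less than $q$ (the graph depends on the pair $(p,q)$). For a graph $G$, the complement of the projective rank $\overline{\xi_f}(G)$ is the infimum of $d/r$ over all $d,r\in\mathbb{N}$ for which there is an assignment of $r$-dimensional subspaces $W_v\le\mathbb{C}^d$ to the vertices $v$ of $G$ such that distinct non-adjacent vertices receive orthogonal subspaces. *)

theory Defs
  imports Complex_Main "Jordan_Normal_Form.VS_Connect"
begin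

text \<open>Fraction graph E_{p/q}: vertex set Z_p = {0..<p}; distinct i, j adjacent iff
  their cyclic distance min(|i-j|, p-|i-j|) is strictly less than q.\<close>

definition cyc_dist :: "nat \<Rightarrow> nat \<Rightarrow> nat \<Rightarrow> nat" where
  "cyc_dist p i j = (let a = (if i \<le> j then j - i else i - j) in min a (p - a))"

definition frac_adj :: "nat \<Rightarrow> nat \<Rightarrow> nat \<Rightarrow> nat \<Rightarrow> bool" where
  "frac_adj p q i j \<longleftrightarrow> i \<noteq> j \<and> cyc_dist p i j < q"

definition herm_inner :: "complex vec \<Rightarrow> complex vec \<Rightarrow> complex" where
  "herm_inner x y = (\<Sum>i<dim_vec x. x $ i * cnj (y $ i))"

definition is_subspace_of_dim :: "nat \<Rightarrow> nat \<Rightarrow> complex vec set \<Rightarrow> bool" where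
  "is_subspace_of_dim d r W \<longleftrightarrow>
     subspace class_ring W (module_vec TYPE(complex) d) \<and>
     vectorspace.dim class_ring ((module_vec TYPE(complex) d)\<lparr>carrier := W\<rparr>) = r"

definition orth_sets :: "complex vec set \<Rightarrow> complex vec set \<Rightarrow> bool" where
  "orth_sets U W \<longleftrightarrow> (\<forall>x\<in>U. \<forall>y\<in>W. herm_inner x y = 0)"

definition compl_proj_rep :: "'v set \<Rightarrow> ('v \<Rightarrow> 'v \<Rightarrow> bool) \<Rightarrow> nat \<Rightarrow> nat \<Rightarrow> bool" where
  "compl_proj_rep V adj d r \<longleftrightarrow>
     (\<exists>W :: 'v \<Rightarrow> complex vec set.
        (\<forall>v\<in>V. is_subspace_of_dim d r (W v)) \<and>
        (\<forall>u\<in>V. \<forall>v\<in>V. u \<noteq> v \<and> \<not> adj u v \<longrightarrow> orth_sets (W u) (W v)))"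

definition compl_proj_rank :: "'v set \<Rightarrow> ('v \<Rightarrow> 'v \<Rightarrow> bool) \<Rightarrow> real" where
  "compl_proj_rank V adj =
     Inf {real d / real r | d r. d \<ge> 1 \<and> r \<ge> 1 \<and> compl_proj_rep V adj d r}"

end

theory Submission
  imports Defs "HOL-Library.Function_Algebras"
begin

interpretation fv: vector_space "\<lambda>(c::complex) (f::nat\<Rightarrow>complex). (\<lambda>i. c * f i)"
  by unfold_locales (auto simp: fun_eq_iff algebra_simps)

definition Vd :: "nat \<Rightarrow> (nat \<Rightarrow> complex) set" where
  "Vd d = {f. \<forall>i\<ge>d. f i = 0}"

definition hip :: "nat \<Rightarrow> (nat \<Rightarrow> complex) \<Rightarrow> (nat \<Rightarrow> complex) \<Rightarrow> complex" where
  "hip d f g = (\<Sum>i<d. f i * cnj (g i))"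

definition horth :: "nat \<Rightarrow> (nat \<Rightarrow> complex) set \<Rightarrow> (nat \<Rightarrow> complex) set \<Rightarrow> bool" where
  "horth d A B \<longleftrightarrow> (\<forall>x\<in>A. \<forall>y\<in>B. hip d x y = 0)"

definition ue :: "nat \<Rightarrow> nat \<Rightarrow> complex" where
  "ue j = (\<lambda>i. if i = j then 1 else 0)"

lemma sum_fun_apply: "(sum f A) x = (\<Sum>a\<in>A. f a x)"
  by (induct A rule: infinite_finite_induct) (auto simp: func_plus func_zero)

lemma Vd_subspace: "fv.subspace (Vd d)"
  unfolding fv.subspace_def Vd_def by (auto simp: func_plus func_zero)

lemma Vd_sub_span: "Vd d \<subseteq> fv.span (ue ` {..<d})"
proof
  fix f assume f: "f \<in> Vd d"
  have eq: "f = (\<Sum>j<d. (\<lambda>i. f j * ue j i))"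
  proof
    fix i
    have "(\<Sum>j<d. (\<lambda>i. f j * ue j i)) i = (\<Sum>j<d. f j * ue j i)"
      by (simp add: sum_fun_apply)
    also have "\<dots> = (\<Sum>j<d. if j = i then f i else 0)"
      by (rule sum.cong) (auto simp: ue_def)
    also have "\<dots> = (if i < d then f i else 0)"
      by (simp add: sum.delta')
    also have "\<dots> = f i" using f by (auto simp: Vd_def)
    finally show "f i = (\<Sum>j<d. (\<lambda>i. f j * ue j i)) i" by simp
  qed
  show "f \<in> fv.span (ue ` {..<d})"
    by (subst eq, rule fv.span_sum) (auto intro: fv.span_scale fv.span_base)
qed

lemma indep_bound:
  assumes "fv.independent X" "X \<subseteq> Vd d"
  shows "finite X \<and> card X \<le> d"
proof -
  have "finite X \<and> card X \<le> card (ue ` {..<d})"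
    using fv.independent_span_bound[OF _ assms(1)] assms(2) Vd_sub_span by blast
  moreover have "card (ue ` {..<d}) \<le> d"
    using card_image_le[of "{..<d}" ue] by simp
  ultimately show ?thesis by linarith
qed

lemma dim_le_d: "A \<subseteq> Vd d \<Longrightarrow> fv.dim A \<le> d"
proof -
  assume "A \<subseteq> Vd d"
  then have "fv.dim A \<le> card (ue ` {..<d})"
    using Vd_sub_span by (intro fv.dim_le_card) auto
  also have "\<dots> \<le> d" using card_image_le[of "{..<d}" ue] by simp
  finally show ?thesis .
qed

lemma indep_card_le_dim:
  assumes "fv.independent X" "X \<subseteq> S" "S \<subseteq> Vd d"
  shows "card X \<le> fv.dim S"
proof -
  obtain B where B: "B \<subseteq> S" "fv.independent B" "S \<subseteq> fv.span B" "card B = fv.dim S"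
    using fv.basis_exists by blast
  have "finite B" using indep_bound[OF B(2)] B(1) assms(3) by blast
  then have "card X \<le> card B"
    using fv.independent_span_bound[OF _ assms(1)] assms(2) B(3) by blast
  then show ?thesis using B(4) by simp
qed

lemma dim_mono:
  assumes "A \<subseteq> B" "B \<subseteq> Vd d"
  shows "fv.dim A \<le> fv.dim B"
proof -
  obtain X where X: "X \<subseteq> A" "fv.independent X" "A \<subseteq> fv.span X" "card X = fv.dim A"
    using fv.basis_exists by blast
  show ?thesis using indep_card_le_dim[OF X(2) _ assms(2)] X(1,4) assms(1) by auto
qed

lemma dim_zero: "A \<subseteq> {0} \<Longrightarrow> fv.dim A = 0"
  using fv.dim_le_card[of A "{}"] by auto

lemma span_sub_Vd: "A \<subseteq> Vd d \<Longrightarrow> fv.span A \<subseteq> Vd d"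
  using fv.span_minimal Vd_subspace by blast

lemma indep_sum_zero:
  assumes "fv.independent S" "finite S" "(\<Sum>v\<in>S. (\<lambda>i. u v * v i)) = 0" "v \<in> S"
  shows "u v = 0"
  using fv.dependent_finite[OF assms(2)] assms by blast

lemma grassmann:
  assumes sA: "fv.subspace A" and sB: "fv.subspace B" and A: "A \<subseteq> Vd d" and B: "B \<subseteq> Vd d"
  shows "fv.dim A + fv.dim B \<le> fv.dim (fv.span (A \<union> B)) + fv.dim (A \<inter> B)"
proof -
  obtain I where I: "I \<subseteq> A \<inter> B" "fv.independent I" "A \<inter> B \<subseteq> fv.span I" "card I = fv.dim (A \<inter> B)"
    using fv.basis_exists by blast
  obtain C where C: "I \<subseteq> C" "C \<subseteq> A" "fv.independent C" "A \<subseteq> fv.span C"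
    using fv.maximal_independent_subset_extend[of I A] I by blast
  obtain D where D: "I \<subseteq> D" "D \<subseteq> B" "fv.independent D" "B \<subseteq> fv.span D"
    using fv.maximal_independent_subset_extend[of I B] I by blast
  have fC: "finite C" using indep_bound[OF C(3)] C(2) A by blast
  have fD: "finite D" using indep_bound[OF D(3)] D(2) B by blast
  have fI: "finite I" using fC C(1) finite_subset by blast
  have dA: "fv.dim A = card C" using fv.basis_card_eq_dim[OF C(2) C(4) C(3)] by simp
  have dB: "fv.dim B = card D" using fv.basis_card_eq_dim[OF D(2) D(4) D(3)] by simp
  have CD_I: "card (C \<inter> D) \<le> card I"
  proof -
    have "fv.independent (C \<inter> D)" using C(3) fv.independent_mono by blast
    moreover have "C \<inter> D \<subseteq> fv.span I" using C(2) D(2) I(3) by blast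
    ultimately show ?thesis using fv.independent_span_bound[OF fI] by blast
  qed
  have indCD: "fv.independent (C \<union> D)"
  proof -
    have fin: "finite (C \<union> D)" using fC fD by simp
    have "\<forall>v\<in>C \<union> D. u v = 0" if u0: "(\<Sum>v\<in>C \<union> D. (\<lambda>i. u v * v i)) = 0" for u
    proof -
      define x where "x = (\<Sum>v\<in>C. (\<lambda>i. u v * v i))"
      define y where "y = (\<Sum>v\<in>D - C. (\<lambda>i. u v * v i))"
      have xy: "x + y = 0"
      proof -
        have "C \<union> D = C \<union> (D - C)" by blast
        then have "(\<Sum>v\<in>C \<union> D. (\<lambda>i. u v * v i)) = (\<Sum>v\<in>C \<union> (D - C). (\<lambda>i. u v * v i))" by simp
        also have "\<dots> = x + y" unfolding x_def y_def by (rule sum.union_disjoint) (use fC fD in auto)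
        finally show ?thesis using u0 by simp
      qed
      have xA: "x \<in> A" unfolding x_def
        by (rule fv.subspace_sum[OF sA]) (use C(2) sA fv.subspace_scale in blast)
      have yB: "y \<in> B" unfolding y_def
        by (rule fv.subspace_sum[OF sB]) (use D(2) sB fv.subspace_scale in blast)
      have "y = - x" using xy by (simp add: eq_neg_iff_add_eq_0 add.commute)
      then have yA: "y \<in> A" using fv.subspace_neg[OF sA xA] by simp
      then have "y \<in> fv.span I" using yB I(3) by blast
      then obtain e where e: "y = (\<Sum>v\<in>I. (\<lambda>i. e v * v i))"
        using fv.span_finite[OF fI] by auto
      define c where "c v = (if v \<in> D - C then u v else if v \<in> I then - e v else 0)" for v
      have "(\<Sum>v\<in>D. (\<lambda>i. c v * v i)) = (\<Sum>v\<in>D - C. (\<lambda>i. c v * v i)) + (\<Sum>v\<in>I. (\<lambda>i. c v * v i))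
             + (\<Sum>v\<in>(D \<inter> C) - I. (\<lambda>i. c v * v i))"
      proof -
        have "D = (D - C) \<union> (I \<union> ((D \<inter> C) - I))" using C(1) D(1) by blast
        then have "(\<Sum>v\<in>D. (\<lambda>i. c v * v i)) = (\<Sum>v\<in>(D - C) \<union> (I \<union> ((D \<inter> C) - I)). (\<lambda>i. c v * v i))"
          by simp
        also have "\<dots> = (\<Sum>v\<in>D - C. (\<lambda>i. c v * v i)) + (\<Sum>v\<in>I \<union> ((D \<inter> C) - I). (\<lambda>i. c v * v i))"
          by (rule sum.union_disjoint) (use fD fI C(1) in auto)
        also have "(\<Sum>v\<in>I \<union> ((D \<inter> C) - I). (\<lambda>i. c v * v i)) = (\<Sum>v\<in>I. (\<lambda>i. c v * v i)) + (\<Sum>v\<in>(D \<inter> C) - I. (\<lambda>i. c v * v i))"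
          by (rule sum.union_disjoint) (use fD fI in auto)
        finally show ?thesis by (simp only: add.assoc)
      qed
      also have "(\<Sum>v\<in>D - C. (\<lambda>i. c v * v i)) = y"
        unfolding y_def c_def by (rule sum.cong) auto
      also have "(\<Sum>v\<in>I. (\<lambda>i. c v * v i)) = - y"
      proof -
        have "(\<Sum>v\<in>I. (\<lambda>i. c v * v i)) = (\<Sum>v\<in>I. - (\<lambda>i. e v * v i))"
          unfolding c_def using C(1) by (intro sum.cong) (auto simp: fun_eq_iff)
        also have "\<dots> = - y" using e by (simp add: sum_negf)
        finally show ?thesis .
      qed
      also have "(\<Sum>v\<in>(D \<inter> C) - I. (\<lambda>i. c v * v i)) = 0"
        unfolding c_def by (intro sum.neutral) (auto simp: fun_eq_iff)
      finally have "(\<Sum>v\<in>D. (\<lambda>i. c v * v i)) = 0" by (simp add: func_zero)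
      then have c0: "\<And>v. v \<in> D \<Longrightarrow> c v = 0"
        using indep_sum_zero[OF D(3) fD] by blast
      have uDC: "\<And>v. v \<in> D - C \<Longrightarrow> u v = 0" using c0 unfolding c_def by force
      have "y = 0" unfolding y_def by (intro sum.neutral) (auto simp: uDC fun_eq_iff)
      then have "x = 0" using xy by simp
      then have uC: "\<And>v. v \<in> C \<Longrightarrow> u v = 0"
        using indep_sum_zero[OF C(3) fC] unfolding x_def by blast
      show ?thesis using uC uDC by blast
    qed
    then show ?thesis using fv.dependent_finite[OF fin] by blast
  qed
  have "card (C \<union> D) \<le> fv.dim (fv.span (A \<union> B))"
  proof (rule indep_card_le_dim[OF indCD])
    show "C \<union> D \<subseteq> fv.span (A \<union> B)" using C(2) D(2) fv.span_superset by blast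
    show "fv.span (A \<union> B) \<subseteq> Vd d" using A B span_sub_Vd by blast
  qed
  moreover have "card (C \<union> D) + card (C \<inter> D) = card C + card D"
    using card_Un_Int[OF fC fD] by simp
  ultimately show ?thesis using dA dB I(4) CD_I by linarith
qed

lemma hip_add_left: "hip d (x + y) z = hip d x z + hip d y z"
  by (simp add: hip_def func_plus distrib_right sum.distrib)

lemma hip_scale_left: "hip d (\<lambda>i. c * x i) z = c * hip d x z"
  by (simp add: hip_def sum_distrib_left mult.assoc)

lemma hip_zero_left: "hip d 0 z = 0"
  by (simp add: hip_def func_zero)

lemma hip_cnj: "hip d y x = cnj (hip d x y)"
  by (simp add: hip_def mult.commute)

lemma horth_sym: "horth d A B \<Longrightarrow> horth d B A"
  unfolding horth_def
proof (intro ballI)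
  fix x y assume "\<forall>x\<in>A. \<forall>y\<in>B. hip d x y = 0" "x \<in> B" "y \<in> A"
  then have "hip d y x = 0" by blast
  then show "hip d x y = 0" by (subst hip_cnj) simp
qed

lemma horth_mono: "horth d A B \<Longrightarrow> A' \<subseteq> A \<Longrightarrow> B' \<subseteq> B \<Longrightarrow> horth d A' B'"
  unfolding horth_def by blast

lemma horth_span_left:
  assumes "horth d A B" shows "horth d (fv.span A) B"
  unfolding horth_def
proof (intro ballI)
  fix x y assume x: "x \<in> fv.span A" and y: "y \<in> B"
  have "fv.subspace {x. hip d x y = 0}"
    unfolding fv.subspace_def by (auto simp: hip_add_left hip_scale_left hip_zero_left)
  then show "hip d x y = 0"
    using fv.span_induct[OF x, of "\<lambda>x. hip d x y = 0"] assms y unfolding horth_def by blast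
qed

lemma horth_span:
  assumes "horth d A B" shows "horth d (fv.span A) (fv.span B)"
  using horth_span_left[OF horth_sym[OF horth_span_left[OF horth_sym[OF assms]]]] .

lemma horth_self:
  assumes "A \<subseteq> Vd d" "horth d A A" shows "A \<subseteq> {0}"
proof
  fix x assume x: "x \<in> A"
  have "hip d x x = 0" using assms(2) x unfolding horth_def by blast
  moreover have "hip d x x = complex_of_real (\<Sum>i<d. (cmod (x i))\<^sup>2)"
    by (simp only: hip_def of_real_sum complex_norm_square)
  ultimately have "complex_of_real (\<Sum>i<d. (cmod (x i))\<^sup>2) = 0" by simp
  then have "(\<Sum>i<d. (cmod (x i))\<^sup>2) = 0" by (simp only: of_real_eq_0_iff)
  then have "\<forall>i\<in>{..<d}. (cmod (x i))\<^sup>2 = 0"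
    by (subst sum_nonneg_eq_0_iff[symmetric]) auto
  have "x i = 0" for i
  proof (cases "i < d")
    case True
    then have "(cmod (x i))\<^sup>2 = 0" using \<open>\<forall>i\<in>{..<d}. (cmod (x i))\<^sup>2 = 0\<close> by simp
    then show ?thesis by simp
  next
    case False
    then show ?thesis using assms(1) x unfolding Vd_def by auto
  qed
  then have "\<forall>i. x i = 0" by blast
  then show "x \<in> {0}" by (simp add: fun_eq_iff func_zero)
qed

lemma span_Un_span: "fv.span (A \<union> fv.span X) = fv.span (A \<union> X)"
proof
  show "fv.span (A \<union> X) \<subseteq> fv.span (A \<union> fv.span X)"
    by (intro fv.span_mono) (use fv.span_superset in blast)
  have "A \<union> fv.span X \<subseteq> fv.span (A \<union> X)"
    using fv.span_superset[of "A \<union> X"] fv.span_mono[of X "A \<union> X"] by blast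
  then show "fv.span (A \<union> fv.span X) \<subseteq> fv.span (A \<union> X)"
    using fv.span_minimal fv.subspace_span by blast
qed

lemma clique:
  assumes "finite I" "\<forall>i\<in>I. fv.subspace (F i) \<and> F i \<subseteq> Vd d"
    "\<forall>i\<in>I. \<forall>j\<in>I. i \<noteq> j \<longrightarrow> horth d (F i) (F j)"
  shows "(\<Sum>i\<in>I. fv.dim (F i)) \<le> fv.dim (fv.span (\<Union>i\<in>I. F i))"
  using assms
proof (induction I rule: finite_induct)
  case empty then show ?case by simp
next
  case (insert i I)
  define R where "R = fv.span (\<Union>j\<in>I. F j)"
  have Fi: "fv.subspace (F i)" "F i \<subseteq> Vd d" using insert.prems by auto
  have RV: "R \<subseteq> Vd d" unfolding R_def using insert.prems by (intro span_sub_Vd) auto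
  have sR: "fv.subspace R" unfolding R_def by simp
  have hij: "horth d (F i) (F j)" if "j \<in> I" for j
  proof -
    have "i \<noteq> j" using that insert.hyps(2) by auto
    then show ?thesis using insert.prems(2) that by simp
  qed
  have "horth d (F i) (\<Union>j\<in>I. F j)"
    unfolding horth_def
  proof (intro ballI)
    fix x y assume x: "x \<in> F i" and y: "y \<in> (\<Union>j\<in>I. F j)"
    then obtain j where "j \<in> I" "y \<in> F j" by blast
    then show "hip d x y = 0" using hij x unfolding horth_def by blast
  qed
  then have "horth d (F i) R" unfolding R_def
    using horth_sym[OF horth_span_left[OF horth_sym]] by blast
  then have "horth d (F i \<inter> R) (F i \<inter> R)" by (rule horth_mono) auto
  then have "F i \<inter> R \<subseteq> {0}" using Fi(2) by (intro horth_self) auto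
  then have d0: "fv.dim (F i \<inter> R) = 0" by (rule dim_zero)
  have g: "fv.dim (F i) + fv.dim R \<le> fv.dim (fv.span (F i \<union> R))"
    using grassmann[OF Fi(1) sR Fi(2) RV] d0 by simp
  have "fv.span (F i \<union> R) = fv.span (\<Union>j\<in>insert i I. F j)"
    unfolding R_def span_Un_span by simp
  moreover have "(\<Sum>j\<in>I. fv.dim (F j)) \<le> fv.dim R"
    unfolding R_def using insert.IH insert.prems by auto
  ultimately show ?case using g insert.hyps by simp
qed

lemma clique_d:
  assumes "finite I" "\<forall>i\<in>I. fv.subspace (F i) \<and> F i \<subseteq> Vd d"
    "\<forall>i\<in>I. \<forall>j\<in>I. i \<noteq> j \<longrightarrow> horth d (F i) (F j)"
  shows "(\<Sum>i\<in>I. fv.dim (F i)) \<le> d"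
proof -
  have "fv.span (\<Union>i\<in>I. F i) \<subseteq> Vd d" using assms(2) by (intro span_sub_Vd) auto
  then show ?thesis using clique[OF assms] dim_le_d by (meson le_trans)
qed

lemma cd_lt: "i < j \<Longrightarrow> cyc_dist p i j = min (j - i) (p - (j - i))"
  by (simp add: cyc_dist_def Let_def)

lemma cd_sym: "cyc_dist p i j = cyc_dist p j i"
  by (simp add: cyc_dist_def Let_def)

lemma cd_ge_iff: "i < j \<Longrightarrow> (Q \<le> cyc_dist p i j \<longleftrightarrow> Q \<le> j - i \<and> Q \<le> p - (j - i))"
  by (simp add: cd_lt)

definition Pk :: "(nat \<Rightarrow> (nat \<Rightarrow> complex) set) \<Rightarrow> nat \<Rightarrow> (nat \<Rightarrow> complex) set" where
  "Pk U k = fv.span (\<Union>i\<in>{..k}. U i)"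

definition Tk :: "(nat \<Rightarrow> (nat \<Rightarrow> complex) set) \<Rightarrow> nat \<Rightarrow> (nat \<Rightarrow> complex) set" where
  "Tk U k = Pk U (k - 1) \<inter> U k"

lemma Pk_Vd: "(\<forall>i\<le>k. U i \<subseteq> Vd d) \<Longrightarrow> Pk U k \<subseteq> Vd d"
  unfolding Pk_def by (intro span_sub_Vd) auto

lemma sweep:
  assumes "\<forall>i\<le>k. fv.subspace (U i) \<and> U i \<subseteq> Vd d"
  shows "(\<Sum>i\<le>k. fv.dim (U i)) \<le> fv.dim (Pk U k) + (\<Sum>j\<in>{1..k}. fv.dim (Tk U j))"
  using assms
proof (induction k)
  case 0
  then have "Pk U 0 = U 0" unfolding Pk_def by (simp add: fv.span_eq_iff)
  then show ?case by simp
next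
  case (Suc k)
  have sP: "fv.subspace (Pk U k)" unfolding Pk_def by simp
  have PV: "Pk U k \<subseteq> Vd d" using Suc.prems by (intro Pk_Vd) auto
  have sU: "fv.subspace (U (Suc k))" "U (Suc k) \<subseteq> Vd d" using Suc.prems by auto
  have g: "fv.dim (Pk U k) + fv.dim (U (Suc k)) \<le> fv.dim (fv.span (Pk U k \<union> U (Suc k))) + fv.dim (Pk U k \<inter> U (Suc k))"
    by (rule grassmann[OF sP sU(1) PV sU(2)])
  have "fv.span (Pk U k \<union> U (Suc k)) = fv.span (U (Suc k) \<union> (\<Union>i\<in>{..k}. U i))"
    unfolding Pk_def by (subst Un_commute) (rule span_Un_span)
  also have "U (Suc k) \<union> (\<Union>i\<in>{..k}. U i) = (\<Union>i\<in>{..Suc k}. U i)"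
    by (auto simp: atMost_Suc)
  finally have e1: "fv.span (Pk U k \<union> U (Suc k)) = Pk U (Suc k)" unfolding Pk_def .
  have e2: "Pk U k \<inter> U (Suc k) = Tk U (Suc k)" unfolding Tk_def by simp
  have IH: "(\<Sum>i\<le>k. fv.dim (U i)) \<le> fv.dim (Pk U k) + (\<Sum>j\<in>{1..k}. fv.dim (Tk U j))"
    using Suc.IH Suc.prems by auto
  have s1: "(\<Sum>j\<in>{1..Suc k}. fv.dim (Tk U j)) = (\<Sum>j\<in>{1..k}. fv.dim (Tk U j)) + fv.dim (Tk U (Suc k))"
    by simp
  show ?case using g IH e1 e2 s1 by simp
qed

lemma sum_1_to: "(\<Sum>j\<in>{1..s}. h j) = (\<Sum>j<s. h (Suc j))"
  by (induct s) auto

lemma sum_blocks: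
  fixes g :: "nat \<Rightarrow> nat"
  shows "(\<Sum>i\<in>{s..<s + m * Q}. g i) = (\<Sum>t<m. \<Sum>r<Q. g (s + t * Q + r))"
proof -
  have "(\<Sum>i\<in>{s..<s + m * Q}. g i) = (\<Sum>x\<in>{0..<m * Q}. g (x + s))"
    using sum.shift_bounds_nat_ivl[of g 0 s "m * Q"] by (simp add: add.commute)
  also have "\<dots> = (\<Sum>x<m * Q. g (x + s))" by (simp add: atLeast0LessThan)
  also have "\<dots> = (\<Sum>t<m. sum (\<lambda>x. g (x + s)) {t * Q..<t * Q + Q})"
    by (rule sum.nat_group[symmetric])
  also have "\<dots> = (\<Sum>t<m. \<Sum>r<Q. g (s + t * Q + r))"
  proof (rule sum.cong[OF refl])
    fix t
    have "sum (\<lambda>x. g (x + s)) {0 + t * Q..<Q + t * Q} = (\<Sum>r\<in>{0..<Q}. g (r + t * Q + s))"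
      by (rule sum.shift_bounds_nat_ivl)
    then show "sum (\<lambda>x. g (x + s)) {t * Q..<t * Q + Q} = (\<Sum>r<Q. g (s + t * Q + r))"
      by (simp add: atLeast0LessThan add.commute add.left_commute)
  qed
  finally show ?thesis .
qed

lemma step:
  fixes q p d :: nat and U :: "nat \<Rightarrow> (nat \<Rightarrow> complex) set"
  assumes q1: "1 \<le> q" and pQ: "2 * (q + 1) \<le> p"
    and IH: "\<And>p' R. 2 * q \<le> p' \<Longrightarrow> (\<forall>i<p'. fv.subspace (R i) \<and> R i \<subseteq> Vd d) \<Longrightarrow>
        (\<forall>i<p'. \<forall>j<p'. i \<noteq> j \<longrightarrow> q \<le> cyc_dist p' i j \<longrightarrow> horth d (R i) (R j)) \<Longrightarrow>
        (\<Sum>i<p'. fv.dim (R i)) \<le> q * d"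
    and sub: "\<forall>i<p. fv.subspace (U i) \<and> U i \<subseteq> Vd d"
    and orth: "\<forall>i<p. \<forall>j<p. i \<noteq> j \<longrightarrow> q + 1 \<le> cyc_dist p i j \<longrightarrow> horth d (U i) (U j)"
  shows "(\<Sum>i<p. fv.dim (U i)) \<le> (q + 1) * d"
proof -
  define Q where "Q = q + 1"
  define m where "m = p div Q"
  define s where "s = p mod Q"
  have Q0: "0 < Q" unfolding Q_def by simp
  have p_eq: "p = m * Q + s" unfolding m_def s_def by simp
  have sQ: "s \<le> q" unfolding s_def Q_def using mod_less_divisor[of "q+1" p] by linarith
  have m2: "2 \<le> m"
  proof -
    have "(2 * Q) div Q \<le> p div Q" using pQ unfolding Q_def by (intro div_le_mono) simp
    then show ?thesis unfolding m_def using Q0 by simp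
  qed
  obtain m0 where m0: "m = Suc m0" using m2 by (cases m) auto
  have mQ: "m * Q = m * q + m" unfolding Q_def by (simp add: algebra_simps)
  have orthU: "horth d (U i) (U j)" if "i < j" "j < p" "Q \<le> j - i" "Q \<le> p - (j - i)" for i j
  proof -
    have "Q \<le> cyc_dist p i j" using that cd_ge_iff[of i j Q p] by simp
    then show ?thesis using orth that unfolding Q_def by auto
  qed
  have subU: "fv.subspace (U i)" "U i \<subseteq> Vd d" if "i < p" for i using sub that by auto
  have mulmono: "a * Q \<le> b * Q" if "a \<le> b" for a b using that by simp

  define F where "F t = (if t = 0 then Pk U s else U (s + t * Q))" for t
  have s_lt: "s < p"
  proof -
    have "1 * Q \<le> m * Q" using m2 by (intro mulmono) simp
    then show ?thesis using p_eq Q0 by simp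
  qed
  have Pks: "fv.subspace (Pk U s)" "Pk U s \<subseteq> Vd d"
  proof -
    show "fv.subspace (Pk U s)" unfolding Pk_def by simp
    have "\<And>i. i \<le> s \<Longrightarrow> U i \<subseteq> Vd d" using subU s_lt by simp
    then show "Pk U s \<subseteq> Vd d" unfolding Pk_def by (intro span_sub_Vd) auto
  qed
  have pos_lt: "s + t * Q < p" if "t < m" for t
  proof -
    have "Suc t * Q \<le> m * Q" using that by (intro mulmono) simp
    then show ?thesis using p_eq Q0 mult_Suc[of t Q] by linarith
  qed
  have Fsub: "\<forall>t\<in>{..<m}. fv.subspace (F t) \<and> F t \<subseteq> Vd d"
    unfolding F_def using Pks subU pos_lt by auto
  have Fkey: "horth d (F t) (F t')" if tt: "t < t'" "t' < m" for t t'
  proof -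
    have b_lt: "s + t' * Q < p" using pos_lt tt(2) .
    have A1: "t' * Q + Q \<le> m * Q" using mulmono[of "Suc t'" m] tt by simp
    have A2: "t * Q + Q \<le> t' * Q" using mulmono[of "Suc t" t'] tt by simp
    have A3: "Q \<le> t' * Q" using mulmono[of 1 t'] tt by simp
    show ?thesis
    proof (cases "t = 0")
      case True
      have "horth d (\<Union>i\<in>{..s}. U i) (U (s + t' * Q))"
        unfolding horth_def
      proof (intro ballI)
        fix x y assume "x \<in> (\<Union>i\<in>{..s}. U i)" and y: "y \<in> U (s + t' * Q)"
        then obtain i where i: "i \<le> s" "x \<in> U i" by auto
        have "horth d (U i) (U (s + t' * Q))"
          by (rule orthU) (insert i A1 A2 A3 p_eq True Q0 Q0, linarith)+
        then show "hip d x y = 0" using i y unfolding horth_def by blast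
      qed
      then have "horth d (Pk U s) (U (s + t' * Q))" unfolding Pk_def by (rule horth_span_left)
      then show ?thesis unfolding F_def using True tt by simp
    next
      case False
      then have A4: "Q \<le> t * Q" using mulmono[of 1 t] by simp
      have "horth d (U (s + t * Q)) (U (s + t' * Q))"
        by (rule orthU) (insert A1 A2 A3 A4 p_eq b_lt Q0, linarith)+
      then show ?thesis unfolding F_def using False tt by simp
    qed
  qed
  have Forth: "\<forall>t\<in>{..<m}. \<forall>t'\<in>{..<m}. t \<noteq> t' \<longrightarrow> horth d (F t) (F t')"
  proof (intro ballI impI)
    fix t t' assume "t \<in> {..<m}" "t' \<in> {..<m}" "t \<noteq> t'"
    then show "horth d (F t) (F t')"
      using Fkey horth_sym by (cases "t < t'") (auto simp: not_less_iff_gr_or_eq)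
  qed
  have cls: "(\<Sum>t<m. fv.dim (F t)) \<le> d"
    by (rule clique_d[OF _ Fsub Forth]) simp
  have class_split: "(\<Sum>t<m. fv.dim (F t)) = fv.dim (Pk U s) + (\<Sum>t<m0. fv.dim (U (s + Suc t * Q)))"
    unfolding m0 F_def by (subst sum.lessThan_Suc_shift) simp
  define p' where "p' = m * q + s"
  define f where "f j = j + 1 + (j - s) div q" for j
  define R where "R j = (if j < s then Tk U (j + 1) else U (f j))" for j
  have q0: "0 < q" using q1 by simp
  have delta_lt: "(j - s) div q < m" if "j < p'" for j
  proof -
    have "0 < m * q" using m2 q0 by simp
    then have "j - s < m * q" using that unfolding p'_def by linarith
    then show ?thesis by (simp add: less_mult_imp_div_less)
  qed
  have f_lt: "f j < p" if "s \<le> j" "j < p'" for j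
    using delta_lt[OF that(2)] that p_eq mQ unfolding f_def p'_def by linarith
  have Rsub: "\<forall>j<p'. fv.subspace (R j) \<and> R j \<subseteq> Vd d"
  proof (intro allI impI)
    fix j assume j: "j < p'"
    show "fv.subspace (R j) \<and> R j \<subseteq> Vd d"
    proof (cases "j < s")
      case True
      have "j + 1 < p" using True s_lt by simp
      moreover have "fv.subspace (Pk U j)" unfolding Pk_def by simp
      ultimately show ?thesis unfolding R_def Tk_def using True subU
        by (auto intro: fv.subspace_inter)
    next
      case False
      then show ?thesis unfolding R_def using subU f_lt j by simp
    qed
  qed
  have key2: "horth d (R j) (R j')"
    if jj: "j < j'" "j' < p'" "q \<le> j' - j" "q \<le> p' - (j' - j)" for j j'
  proof (cases "j' < s")
    case True
    then show ?thesis using jj sQ by linarith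
  next
    case js': False
    define b where "b = f j'"
    define d' where "d' = (j' - s) div q"
    have d'm: "d' < m" unfolding d'_def using delta_lt jj by simp
    have b_eq: "b = j' + 1 + d'" unfolding b_def f_def d'_def by simp
    have b_lt: "b < p" unfolding b_def using f_lt jj js' by simp
    have Rj': "R j' = U b" unfolding R_def b_def using js' by simp
    show ?thesis
    proof (cases "j < s")
      case True
      have Rj: "R j = Tk U (j + 1)" unfolding R_def using True by simp
      show ?thesis
      proof (cases "Q \<le> b - (j + 1)")
        case True
        have "horth d (U (j + 1)) (U b)"
          by (rule orthU) (insert True jj b_eq b_lt p_eq mQ d'm Q_def p'_def Q0, linarith)+
        then show ?thesis unfolding Rj Rj' Tk_def by (rule horth_mono) auto
      next
        case False
        have "horth d (\<Union>i\<in>{..j}. U i) (U b)"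
          unfolding horth_def
        proof (intro ballI)
          fix x y assume "x \<in> (\<Union>i\<in>{..j}. U i)" and y: "y \<in> U b"
          then obtain i where i: "i \<le> j" "x \<in> U i" by auto
          have A1: "2 * Q \<le> m * Q" using mulmono[of 2 m] m2 by simp
          have "horth d (U i) (U b)"
            by (rule orthU) (insert i False jj b_eq b_lt p_eq A1 \<open>j < s\<close> Q_def Q0, linarith)+
          then show "hip d x y = 0" using i y unfolding horth_def by blast
        qed
        then have "horth d (Pk U j) (U b)" unfolding Pk_def by (rule horth_span_left)
        then show ?thesis unfolding Rj Rj' Tk_def by (rule horth_mono) auto
      qed
    next
      case False
      define a where "a = f j"
      define d0 where "d0 = (j - s) div q"
      have a_eq: "a = j + 1 + d0" unfolding a_def f_def d0_def by simp
      have "((j - s) + q) div q \<le> (j' - s) div q"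
        using jj False by (intro div_le_mono) linarith
      then have dd: "d0 + 1 \<le> d'" unfolding d0_def d'_def using q0 by simp
      have Rj: "R j = U a" unfolding R_def a_def using False by simp
      have "horth d (U a) (U b)"
        by (rule orthU) (insert jj a_eq b_eq b_lt dd d'm p_eq mQ Q_def p'_def Q0, linarith)+
      then show ?thesis unfolding Rj Rj' .
    qed
  qed
  have Rorth: "\<forall>j<p'. \<forall>j'<p'. j \<noteq> j' \<longrightarrow> q \<le> cyc_dist p' j j' \<longrightarrow> horth d (R j) (R j')"
  proof (intro allI impI)
    fix j j' assume j: "j < p'" and j': "j' < p'" and ne: "j \<noteq> j'" and c: "q \<le> cyc_dist p' j j'"
    show "horth d (R j) (R j')"
    proof (cases "j < j'")
      case True
      then show ?thesis using key2[OF True j'] c cd_ge_iff[OF True] by simp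
    next
      case False
      then have lt: "j' < j" using ne by simp
      have "q \<le> cyc_dist p' j' j" using c cd_sym by metis
      then have "horth d (R j') (R j)" using key2[OF lt j] cd_ge_iff[OF lt] by simp
      then show ?thesis by (rule horth_sym)
    qed
  qed
  have rest: "(\<Sum>j<p'. fv.dim (R j)) \<le> q * d"
  proof (rule IH[OF _ Rsub Rorth])
    have "2 * q \<le> m * q" using mult_le_mono1[OF m2] .
    then show "2 * q \<le> p'" unfolding p'_def by linarith
  qed

  define g where "g i = fv.dim (U i)" for i
  have sumU: "(\<Sum>i<p. g i) = (\<Sum>i<s. g i) + ((\<Sum>t<m. g (s + t * Q)) + (\<Sum>t<m. \<Sum>r<q. g (s + t * Q + Suc r)))"
  proof -
    have eq: "{..<p} = {..<s} \<union> {s..<s + m * Q}" using p_eq by auto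
    have "(\<Sum>i<p. g i) = sum g ({..<s} \<union> {s..<s + m * Q})" by (simp only: eq)
    also have "\<dots> = (\<Sum>i<s. g i) + (\<Sum>i\<in>{s..<s + m * Q}. g i)"
      by (rule sum.union_disjoint) auto
    also have "(\<Sum>i\<in>{s..<s + m * Q}. g i) = (\<Sum>t<m. \<Sum>r<Q. g (s + t * Q + r))"
      by (rule sum_blocks)
    also have "\<dots> = (\<Sum>t<m. g (s + t * Q) + (\<Sum>r<q. g (s + t * Q + Suc r)))"
    proof (rule sum.cong[OF refl])
      fix t
      have QS: "{..<Q} = {..<Suc q}" by (simp add: Q_def)
      have "(\<Sum>r<Q. g (s + t * Q + r)) = (\<Sum>r<Suc q. g (s + t * Q + r))" by (simp only: QS)
      also have "\<dots> = g (s + t * Q + 0) + (\<Sum>r<q. g (s + t * Q + Suc r))"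
        by (rule sum.lessThan_Suc_shift)
      finally show "(\<Sum>r<Q. g (s + t * Q + r)) = g (s + t * Q) + (\<Sum>r<q. g (s + t * Q + Suc r))"
        by simp
    qed
    also have "\<dots> = (\<Sum>t<m. g (s + t * Q)) + (\<Sum>t<m. \<Sum>r<q. g (s + t * Q + Suc r))"
      by (simp add: sum.distrib)
    finally show ?thesis .
  qed
  have sumR: "(\<Sum>j<p'. fv.dim (R j)) = (\<Sum>j<s. fv.dim (Tk U (Suc j))) + (\<Sum>t<m. \<Sum>r<q. g (s + t * Q + Suc r))"
  proof -
    have eq: "{..<p'} = {..<s} \<union> {s..<s + m * q}" unfolding p'_def by auto
    have "(\<Sum>j<p'. fv.dim (R j)) = (\<Sum>j\<in>{..<s} \<union> {s..<s + m * q}. fv.dim (R j))" by (simp only: eq)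
    also have "\<dots> = (\<Sum>j<s. fv.dim (R j)) + (\<Sum>j\<in>{s..<s + m * q}. fv.dim (R j))"
      by (rule sum.union_disjoint) auto
    also have "(\<Sum>j<s. fv.dim (R j)) = (\<Sum>j<s. fv.dim (Tk U (Suc j)))"
      unfolding R_def by simp
    also have "(\<Sum>j\<in>{s..<s + m * q}. fv.dim (R j)) = (\<Sum>t<m. \<Sum>r<q. fv.dim (R (s + t * q + r)))"
      by (rule sum_blocks)
    also have "\<dots> = (\<Sum>t<m. \<Sum>r<q. g (s + t * Q + Suc r))"
    proof (intro sum.cong refl)
      fix t r assume "r \<in> {..<q}"
      then have r: "r < q" by simp
      have "(t * q + r) div q = t" using r q0 by simp
      then have "f (s + t * q + r) = s + t * Q + Suc r"
        unfolding f_def Q_def by (simp add: algebra_simps)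
      then show "fv.dim (R (s + t * q + r)) = g (s + t * Q + Suc r)"
        unfolding R_def g_def by simp
    qed
    finally show ?thesis .
  qed
  have sw: "(\<Sum>i<s. g i) + g s \<le> fv.dim (Pk U s) + (\<Sum>j<s. fv.dim (Tk U (Suc j)))"
  proof -
    have "\<forall>i\<le>s. fv.subspace (U i) \<and> U i \<subseteq> Vd d" using subU s_lt by simp
    from sweep[OF this] have "(\<Sum>i\<le>s. g i) \<le> fv.dim (Pk U s) + (\<Sum>j\<in>{1..s}. fv.dim (Tk U j))"
      unfolding g_def .
    moreover have "(\<Sum>i\<le>s. g i) = (\<Sum>i<s. g i) + g s"
    proof -
      have "(\<Sum>i\<le>s. g i) = (\<Sum>i<Suc s. g i)" by (simp only: lessThan_Suc_atMost)
      then show ?thesis by simp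
    qed
    ultimately show ?thesis using sum_1_to[of "\<lambda>j. fv.dim (Tk U j)" s] by linarith
  qed
  have sum_m: "(\<Sum>t<m. g (s + t * Q)) = g s + (\<Sum>t<m0. g (s + Suc t * Q))"
    unfolding m0 by (subst sum.lessThan_Suc_shift) simp
  have "(\<Sum>i<p. fv.dim (U i)) = (\<Sum>i<p. g i)" unfolding g_def ..
  also have "\<dots> \<le> (\<Sum>t<m. fv.dim (F t)) + (\<Sum>j<p'. fv.dim (R j))"
    using sumU sumR sw sum_m class_split unfolding g_def by linarith
  also have "\<dots> \<le> d + q * d" using cls rest by linarith
  finally show ?thesis by simp
qed

lemma weighted:
  fixes q p d :: nat and U :: "nat \<Rightarrow> (nat \<Rightarrow> complex) set"
  shows "1 \<le> q \<Longrightarrow> 2 * q \<le> p \<Longrightarrow> (\<forall>i<p. fv.subspace (U i) \<and> U i \<subseteq> Vd d) \<Longrightarrow>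
    (\<forall>i<p. \<forall>j<p. i \<noteq> j \<longrightarrow> q \<le> cyc_dist p i j \<longrightarrow> horth d (U i) (U j)) \<Longrightarrow>
    (\<Sum>i<p. fv.dim (U i)) \<le> q * d"
proof (induction q arbitrary: p U)
  case 0
  then show ?case by simp
next
  case (Suc q)
  show ?case
  proof (cases "q = 0")
    case True
    have "(\<Sum>i\<in>{..<p}. fv.dim (U i)) \<le> d"
    proof (rule clique_d)
      show "finite {..<p}" by simp
      show "\<forall>i\<in>{..<p}. fv.subspace (U i) \<and> U i \<subseteq> Vd d" using Suc.prems(3) by auto
      show "\<forall>i\<in>{..<p}. \<forall>j\<in>{..<p}. i \<noteq> j \<longrightarrow> horth d (U i) (U j)"
      proof (intro ballI impI)
        fix i j assume i: "i \<in> {..<p}" and j: "j \<in> {..<p}" and ne: "i \<noteq> j"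
        have "1 \<le> cyc_dist p i j"
        proof (cases "i < j")
          case True
          have "1 \<le> j - i" "1 \<le> p - (j - i)" using True j by auto
          then show ?thesis by (simp add: cd_lt[OF True])
        next
          case False
          then have "j < i" using ne by simp
          have "1 \<le> i - j" "1 \<le> p - (i - j)" using \<open>j < i\<close> i by auto
          then show ?thesis by (simp add: cd_lt[OF \<open>j < i\<close>] cd_sym[of p i j])
        qed
        then show "horth d (U i) (U j)" using Suc.prems(4) i j ne True by auto
      qed
    qed
    then show ?thesis using True by simp
  next
    case False
    then have q1: "1 \<le> q" by simp
    have "(\<Sum>i<p. fv.dim (U i)) \<le> (q + 1) * d"
    proof (rule step[OF q1])
      show "2 * (q + 1) \<le> p" using Suc.prems(2) by simp
      show "\<And>p' R. 2 * q \<le> p' \<Longrightarrow> (\<forall>i<p'. fv.subspace (R i) \<and> R i \<subseteq> Vd d) \<Longrightarrow>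
        (\<forall>i<p'. \<forall>j<p'. i \<noteq> j \<longrightarrow> q \<le> cyc_dist p' i j \<longrightarrow> horth d (R i) (R j)) \<Longrightarrow>
        (\<Sum>i<p'. fv.dim (R i)) \<le> q * d"
        using Suc.IH[OF q1] by blast
      show "\<forall>i<p. fv.subspace (U i) \<and> U i \<subseteq> Vd d" using Suc.prems(3) .
      show "\<forall>i<p. \<forall>j<p. i \<noteq> j \<longrightarrow> q + 1 \<le> cyc_dist p i j \<longrightarrow> horth d (U i) (U j)"
        using Suc.prems(4) by simp
    qed
    then show ?thesis by simp
  qed
qed

definition emb :: "complex vec \<Rightarrow> nat \<Rightarrow> complex" where
  "emb v = (\<lambda>i. if i < dim_vec v then v $ i else 0)"

lemma emb_Vd: "v \<in> carrier_vec d \<Longrightarrow> emb v \<in> Vd d"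
  by (auto simp: emb_def Vd_def)

lemma emb_inj: "inj_on emb (carrier_vec d)"
proof (rule inj_onI)
  fix v w assume v: "v \<in> carrier_vec d" and w: "w \<in> carrier_vec d" and e: "emb v = emb w"
  show "v = w"
  proof (rule eq_vecI)
    show "dim_vec v = dim_vec w" using v w by simp
    fix i assume "i < dim_vec w"
    then show "v $ i = w $ i" using fun_cong[OF e, of i] v w by (simp add: emb_def)
  qed
qed

lemma emb_add: "v \<in> carrier_vec d \<Longrightarrow> w \<in> carrier_vec d \<Longrightarrow> emb (v + w) = emb v + emb w"
  by (auto simp: emb_def func_plus fun_eq_iff)

lemma emb_smult: "emb (c \<cdot>\<^sub>v v) = (\<lambda>i. c * emb v i)"
  by (auto simp: emb_def fun_eq_iff)

lemma emb_zero: "emb (0\<^sub>v d) = 0"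
  by (auto simp: emb_def func_zero fun_eq_iff)

lemma herm_emb: "v \<in> carrier_vec d \<Longrightarrow> w \<in> carrier_vec d \<Longrightarrow> herm_inner v w = hip d (emb v) (emb w)"
  by (auto simp: herm_inner_def hip_def emb_def intro!: sum.cong)

context fixes d :: nat begin
interpretation V: vec_space "TYPE(complex)" d .

lemma emb_lincomb:
  assumes "finite A" "A \<subseteq> carrier_vec d"
  shows "emb (V.lincomb a A) = (\<Sum>v\<in>A. (\<lambda>i. a v * emb v i))"
proof
  fix i
  have dimL: "dim_vec (V.lincomb a A) = d" using V.lincomb_dim[OF assms] .
  show "emb (V.lincomb a A) i = (\<Sum>v\<in>A. (\<lambda>i. a v * emb v i)) i"
  proof (cases "i < d")
    case True
    have "emb (V.lincomb a A) i = (\<Sum>x\<in>A. a x * x $ i)"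
      using V.lincomb_index[OF True assms(2)] dimL True by (simp add: emb_def)
    also have "\<dots> = (\<Sum>v\<in>A. a v * emb v i)"
      using assms(2) True by (intro sum.cong) (auto simp: emb_def)
    finally show ?thesis by (simp add: sum_fun_apply)
  next
    case False
    have "(\<Sum>v\<in>A. a v * emb v i) = 0"
      using assms(2) False by (intro sum.neutral) (auto simp: emb_def)
    then show ?thesis using dimL False by (simp add: emb_def sum_fun_apply)
  qed
qed

lemma jnf_dim_eq:
  assumes sW: "subspace class_ring W (module_vec TYPE(complex) d)"
  shows "vectorspace.dim class_ring ((module_vec TYPE(complex) d)\<lparr>carrier := W\<rparr>) = fv.dim (emb ` W)
     \<and> fv.subspace (emb ` W) \<and> emb ` W \<subseteq> Vd d"
proof -
  have sm: "LinearCombinations.submodule class_ring W V.V" using V.is_module[OF sW] .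
  have Wc: "W \<subseteq> carrier_vec d" using sm unfolding submodule_def by simp
  let ?P = "\<lambda>S. S \<subseteq> W \<and> V.lin_indpt S"
  have bnd: "\<And>S. ?P S \<Longrightarrow> finite S \<and> card S \<le> d"
    using V.li_le_dim V.dim_is_n Wc by (metis V.fin_dim subset_trans)
  have "?P {}" by (simp add: V.lin_dep_def)
  from maximal_exists[of ?P d "{}", OF bnd this] obtain B where B: "finite B" "maximal B ?P" by blast
  have BW: "B \<subseteq> W" and liB: "V.lin_indpt B" using B(2) unfolding maximal_def by auto
  have spanB: "V.span B = W"
  proof
    show "V.span B \<subseteq> W" using V.span_is_subset[OF BW sm] .
    show "W \<subseteq> V.span B"
    proof
      fix w assume w: "w \<in> W"
      show "w \<in> V.span B"
      proof (rule ccontr)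
        assume nw: "w \<notin> V.span B"
        have wB: "w \<notin> B" using nw V.in_own_span[of B] BW Wc by blast
        have "V.lin_indpt (B \<union> {w})"
          using V.lin_dep_iff_in_span[of B w] BW Wc liB w wB nw by blast
        then have "?P (B \<union> {w})" using BW w by simp
        then have "B \<union> {w} = B" using B(2) unfolding maximal_def by blast
        then show False using wB by blast
      qed
    qed
  qed
  interpret VW: vectorspace class_ring "V.vs W" using V.subspace_is_vs[OF sW] .
  have basisW: "VW.basis B"
    unfolding VW.basis_def
    using V.span_li_not_depend[OF BW sm] liB spanB BW by simp
  have dJ: "VW.dim = card B" using VW.dim_basis[OF B(1) basisW] .
  have emb_W: "emb ` W \<subseteq> Vd d" using Wc emb_Vd by blast
  have sub: "fv.subspace (emb ` W)"
    unfolding fv.subspace_def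
  proof (intro conjI ballI allI)
    show "0 \<in> emb ` W" using emb_zero[of d] submodule.zero_closed[OF sm] by force
    fix x y assume "x \<in> emb ` W" "y \<in> emb ` W"
    then obtain v w where v: "v \<in> W" "x = emb v" and w: "w \<in> W" "y = emb w" by blast
    have "v + w \<in> W" using submodule.m_closed[OF sm v(1) w(1)] by simp
    then show "x + y \<in> emb ` W" using emb_add[of v d w] v w Wc by force
  next
    fix c x assume "x \<in> emb ` W"
    then obtain v where v: "v \<in> W" "x = emb v" by blast
    have "c \<cdot>\<^sub>v v \<in> W" using submodule.smult_closed[OF sm _ v(1)] by simp
    moreover have "(\<lambda>i. c * x i) = emb (c \<cdot>\<^sub>v v)" using emb_smult[of c v] v(2) by simp
    ultimately show "(\<lambda>i. c * x i) \<in> emb ` W" by (simp only: image_eqI)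
  qed
  have injB: "inj_on emb B" using emb_inj[of d] BW Wc by (meson inj_on_subset subset_trans)
  have indep: "fv.independent (emb ` B)"
  proof
    assume dep: "fv.dependent (emb ` B)"
    have fin: "finite (emb ` B)" using B(1) by simp
    obtain u where u: "\<exists>v\<in>emb ` B. u v \<noteq> 0" "(\<Sum>v\<in>emb ` B. (\<lambda>i. u v * v i)) = 0"
      using dep fv.dependent_finite[OF fin] by blast
    define a where "a = u \<circ> emb"
    have "emb (V.lincomb a B) = (\<Sum>v\<in>B. (\<lambda>i. a v * emb v i))"
      using emb_lincomb[OF B(1)] BW Wc by blast
    also have "\<dots> = (\<Sum>x\<in>emb ` B. (\<lambda>i. u x * x i))"
      unfolding a_def using sum.reindex[OF injB, of "\<lambda>x. (\<lambda>i. u x * x i)"] by simp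
    also have "\<dots> = emb (0\<^sub>v d)" using u(2) emb_zero by simp
    finally have "V.lincomb a B = 0\<^sub>v d"
      using emb_inj[of d] BW Wc V.lincomb_closed[of B a] by (auto simp: inj_on_def)
    moreover obtain v where "v \<in> B" "a v \<noteq> 0" using u(1) unfolding a_def by auto
    ultimately have "V.lin_dep B" unfolding V.lin_dep_def using B(1) by blast
    then show False using liB by simp
  qed
  have spanH: "emb ` W \<subseteq> fv.span (emb ` B)"
  proof
    fix x assume "x \<in> emb ` W"
    then obtain w where w: "w \<in> W" "x = emb w" by blast
    then have "w \<in> V.span B" using spanB by simp
    then obtain a A where aA: "w = V.lincomb a A" "finite A" "A \<subseteq> B" unfolding V.span_def by blast
    have "emb w = (\<Sum>v\<in>A. (\<lambda>i. a v * emb v i))"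
      using emb_lincomb[OF aA(2)] aA BW Wc by blast
    also have "\<dots> \<in> fv.span (emb ` B)"
      using aA(3) by (intro fv.span_sum fv.span_scale fv.span_base) auto
    finally show "x \<in> fv.span (emb ` B)" using w by simp
  qed
  have "fv.dim (emb ` W) = card (emb ` B)"
    by (rule fv.dim_unique[OF _ spanH indep refl]) (use BW in blast)
  also have "\<dots> = card B" using card_image[OF injB] .
  finally show ?thesis using dJ sub emb_W by simp
qed

end

lemma mod_shift:
  fixes u p k :: nat
  assumes "u < p" "k < p"
  shows "(k + (p - u)) mod p = (if u \<le> k then k - u else k + (p - u))"
proof (cases "u \<le> k")
  case True
  then have "k + (p - u) = (k - u) + p" using assms by arith
  then have "(k + (p - u)) mod p = (k - u) mod p" by simp
  also have "\<dots> = k - u" using assms by simp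
  finally show ?thesis using True by simp
next
  case False
  then show ?thesis using assms by simp
qed

lemma window_disj:
  assumes u: "u < p" and v: "v < p" and k: "k < p" and q: "1 \<le> q"
    and a: "(k + (p - u)) mod p < q" and b: "(k + (p - v)) mod p < q"
  shows "cyc_dist p u v < q"
proof -
  have main: "cyc_dist p u v < q" if uv: "u < v" "v < p" "u < p"
      "(k + (p - u)) mod p < q" "(k + (p - v)) mod p < q" for u v
  proof -
    have cd: "cyc_dist p u v = min (v - u) (p - (v - u))" using cd_lt[OF uv(1)] .
    show ?thesis
    proof (cases "v \<le> k")
      case True
      then have "k - u < q" "k - v < q" using uv mod_shift[OF uv(3) k] mod_shift[OF uv(2) k] by auto
      then show ?thesis using cd True uv by linarith
    next
      case False
      show ?thesis
      proof (cases "u \<le> k")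
        case True
        then have "k + (p - v) < q" using uv False mod_shift[OF uv(2) k] by auto
        then show ?thesis using cd True False uv by linarith
      next
        case False2: False
        then have "k + (p - u) < q" "k + (p - v) < q"
          using uv False mod_shift[OF uv(3) k] mod_shift[OF uv(2) k] by auto
        then show ?thesis using cd False2 False uv by linarith
      qed
    qed
  qed
  show ?thesis
  proof (cases "u = v")
    case True
    then show ?thesis using q by (simp add: cyc_dist_def)
  next
    case False
    show ?thesis
    proof (cases "u < v")
      case True
      show ?thesis using main[OF True v u a b] .
    next
      case False2: False
      then have "v < u" using False by simp
      then show ?thesis using main[OF \<open>v < u\<close> u v b a] cd_sym[of p u v] by simp
    qed
  qed
qed

definition win :: "nat \<Rightarrow> nat \<Rightarrow> nat \<Rightarrow> complex vec set" where
  "win p q i = {v \<in> carrier_vec p. \<forall>k<p. q \<le> (k + (p - i)) mod p \<longrightarrow> v $ k = 0}"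

definition wset :: "nat \<Rightarrow> nat \<Rightarrow> nat \<Rightarrow> nat set" where
  "wset p q i = {k. k < p \<and> (k + (p - i)) mod p < q}"

lemma win_subspace: "subspace class_ring (win p q i) (module_vec TYPE(complex) p)"
  unfolding subspace_def submodule_def win_def
  using vec_vs vec_module by (auto simp: module_vec_simps)

lemma wset_card:
  assumes i: "i < p" and qp: "q \<le> p"
  shows "card (wset p q i) = q"
proof -
  define psi where "psi t = (t + i) mod p" for t
  have p0: "0 < p" using i by simp
  have inv2: "(psi t + (p - i)) mod p = t" if "t < p" for t
  proof -
    have "(psi t + (p - i)) mod p = (t + i + (p - i)) mod p"
      unfolding psi_def by (simp add: mod_add_left_eq)
    also have "t + i + (p - i) = t + p" using i by simp
    finally show ?thesis using that by simp
  qed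
  have inv1: "psi ((k + (p - i)) mod p) = k" if "k < p" for k
  proof -
    have "psi ((k + (p - i)) mod p) = (k + (p - i) + i) mod p"
      unfolding psi_def by (simp add: mod_add_left_eq)
    also have "k + (p - i) + i = k + p" using i by simp
    finally show ?thesis using that by simp
  qed
  have eq: "wset p q i = psi ` {..<q}"
  proof
    show "wset p q i \<subseteq> psi ` {..<q}"
    proof
      fix k assume "k \<in> wset p q i"
      then have k: "k < p" "(k + (p - i)) mod p < q" unfolding wset_def by auto
      have e: "psi ((k + (p - i)) mod p) = k" using inv1[OF k(1)] .
      have m: "(k + (p - i)) mod p \<in> {..<q}" using k(2) by simp
      show "k \<in> psi ` {..<q}" by (rule image_eqI[where f=psi, OF e[symmetric] m])
    qed
    show "psi ` {..<q} \<subseteq> wset p q i"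
    proof
      fix k assume "k \<in> psi ` {..<q}"
      then obtain t where t: "t \<in> {..<q}" "k = psi t" by (rule imageE)
      have tq: "t < q" using t(1) by simp
      have tp: "t < p" using tq qp by simp
      have kp: "k < p" using t(2) p0 unfolding psi_def by simp
      have "(k + (p - i)) mod p = t" using inv2[OF tp] t(2) by simp
      then have "(k + (p - i)) mod p < q" using tq by simp
      then show "k \<in> wset p q i" using kp unfolding wset_def by simp
    qed
  qed
  have "inj_on psi {..<q}"
  proof (rule inj_onI)
    fix t t' assume "t \<in> {..<q}" "t' \<in> {..<q}" "psi t = psi t'"
    then have "t < p" "t' < p" "psi t = psi t'" using qp by auto
    then show "t = t'" using inv2[of t] inv2[of t'] by metis
  qed
  then show ?thesis unfolding eq by (simp add: card_image)
qed

lemma ue_inj: "inj ue"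
proof (rule injI)
  fix a b assume "ue a = ue b"
  then have "ue a a = ue b a" by simp
  then show "a = b" by (auto simp: ue_def split: if_splits)
qed

lemma win_dim:
  assumes i: "i < p" and qp: "q \<le> p"
  shows "fv.dim (emb ` win p q i) = q"
proof -
  define S where "S = wset p q i"
  have finS: "finite S" unfolding S_def wset_def by simp
  have Sp: "\<And>k. k \<in> S \<Longrightarrow> k < p" unfolding S_def wset_def by simp
  have BW: "ue ` S \<subseteq> emb ` win p q i"
  proof
    fix x assume "x \<in> ue ` S"
    then obtain k where k: "k \<in> S" "x = ue k" by auto
    have "unit_vec p k \<in> win p q i"
      using k(1) unfolding win_def S_def wset_def by auto
    moreover have "emb (unit_vec p k) = ue k"
      using Sp[OF k(1)] by (auto simp: emb_def ue_def fun_eq_iff)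
    ultimately show "x \<in> emb ` win p q i" using k(2) by force
  qed
  have spanW: "emb ` win p q i \<subseteq> fv.span (ue ` S)"
  proof
    fix x assume "x \<in> emb ` win p q i"
    then obtain v where v: "v \<in> win p q i" "x = emb v" by auto
    have vc: "v \<in> carrier_vec p" using v(1) unfolding win_def by simp
    have eq: "emb v = (\<Sum>k\<in>S. (\<lambda>l. v $ k * ue k l))"
    proof
      fix l
      have "(\<Sum>k\<in>S. (\<lambda>l. v $ k * ue k l)) l = (\<Sum>k\<in>S. v $ k * ue k l)"
        by (simp add: sum_fun_apply)
      also have "\<dots> = (\<Sum>k\<in>S. if k = l then v $ l else 0)"
        by (rule sum.cong) (auto simp: ue_def)
      also have "\<dots> = (if l \<in> S then v $ l else 0)"
        using finS by (simp add: sum.delta')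
      also have "\<dots> = emb v l"
        using v(1) vc unfolding emb_def S_def wset_def win_def by auto
      finally show "emb v l = (\<Sum>k\<in>S. (\<lambda>l. v $ k * ue k l)) l" by simp
    qed
    have "(\<Sum>k\<in>S. (\<lambda>l. v $ k * ue k l)) \<in> fv.span (ue ` S)"
      by (intro fv.span_sum fv.span_scale fv.span_base) auto
    then show "x \<in> fv.span (ue ` S)" using eq v(2) by simp
  qed
  have indep: "fv.independent (ue ` S)"
  proof
    assume dep: "fv.dependent (ue ` S)"
    have fin: "finite (ue ` S)" using finS by simp
    obtain u where u: "\<exists>x\<in>ue ` S. u x \<noteq> 0" "(\<Sum>x\<in>ue ` S. (\<lambda>l. u x * x l)) = 0"
      using dep fv.dependent_finite[OF fin] by blast
    obtain k0 where k0: "k0 \<in> S" "u (ue k0) \<noteq> 0" using u(1) by auto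
    have "0 = (\<Sum>x\<in>ue ` S. (\<lambda>l. u x * x l)) k0" using u(2) by (simp add: func_zero)
    also have "\<dots> = (\<Sum>x\<in>ue ` S. u x * x k0)" by (simp add: sum_fun_apply)
    also have "\<dots> = (\<Sum>k\<in>S. u (ue k) * ue k k0)"
      using sum.reindex[of ue S "\<lambda>x. u x * x k0"] ue_inj by (simp add: inj_on_def)
    also have "\<dots> = (\<Sum>k\<in>S. if k = k0 then u (ue k0) else 0)"
      by (rule sum.cong) (auto simp: ue_def)
    also have "\<dots> = u (ue k0)" using finS k0(1) by (simp add: sum.delta')
    finally show False using k0(2) by simp
  qed
  have "fv.dim (emb ` win p q i) = card (ue ` S)"
    by (rule fv.dim_unique[OF BW spanW indep refl])
  also have "\<dots> = card S" using ue_inj by (simp add: card_image inj_on_def)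
  also have "\<dots> = q" unfolding S_def using wset_card[OF i qp] .
  finally show ?thesis .
qed

lemma win_orth:
  assumes u: "u < p" and v: "v < p" and uv: "u \<noteq> v" and na: "\<not> frac_adj p q u v" and q: "1 \<le> q"
  shows "orth_sets (win p q u) (win p q v)"
  unfolding orth_sets_def
proof (intro ballI)
  fix x y assume x: "x \<in> win p q u" and y: "y \<in> win p q v"
  have xc: "dim_vec x = p" using x unfolding win_def by auto
  have kz: "x $ k * cnj (y $ k) = 0" if k: "k < p" for k
  proof (cases "q \<le> (k + (p - u)) mod p")
    case True
    then show ?thesis using x k unfolding win_def by auto
  next
    case False
    show ?thesis
    proof (cases "q \<le> (k + (p - v)) mod p")
      case True
      then show ?thesis using y k unfolding win_def by auto
    next
      case False2: False
      have "cyc_dist p u v < q" using window_disj[OF u v k q] False False2 by simp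
      then have "frac_adj p q u v" using uv unfolding frac_adj_def by simp
      then show ?thesis using na by simp
    qed
  qed
  show "herm_inner x y = 0" unfolding herm_inner_def xc
    by (rule sum.neutral) (use kz in blast)
qed

lemma upper_rep:
  assumes q: "1 \<le> q" and qp: "q \<le> p"
  shows "compl_proj_rep {0..<p} (frac_adj p q) p q"
  unfolding compl_proj_rep_def
proof (intro exI[of _ "win p q"] conjI ballI impI)
  fix v assume "v \<in> {0..<p}"
  then have v: "v < p" by simp
  have s: "subspace class_ring (win p q v) (module_vec TYPE(complex) p)" by (rule win_subspace)
  show "is_subspace_of_dim p q (win p q v)"
    unfolding is_subspace_of_dim_def using s jnf_dim_eq[OF s] win_dim[OF v qp] by simp
next
  fix u v assume "u \<in> {0..<p}" "v \<in> {0..<p}" "u \<noteq> v \<and> \<not> frac_adj p q u v"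
  then show "orth_sets (win p q u) (win p q v)" using win_orth q by auto
qed

lemma lower_bound:
  assumes q: "1 \<le> q" and pq: "2 * q \<le> p" and rep: "compl_proj_rep {0..<p} (frac_adj p q) d r"
  shows "p * r \<le> q * d"
proof -
  have ex: "\<exists>W. (\<forall>v\<in>{0..<p}. is_subspace_of_dim d r (W v)) \<and>
    (\<forall>u\<in>{0..<p}. \<forall>v\<in>{0..<p}. u \<noteq> v \<and> \<not> frac_adj p q u v \<longrightarrow> orth_sets (W u) (W v))"
    using rep unfolding compl_proj_rep_def .
  obtain W where W0: "(\<forall>v\<in>{0..<p}. is_subspace_of_dim d r (W v)) \<and>
    (\<forall>u\<in>{0..<p}. \<forall>v\<in>{0..<p}. u \<noteq> v \<and> \<not> frac_adj p q u v \<longrightarrow> orth_sets (W u) (W v))"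
    using ex by (rule exE)
  note W = conjunct1[OF W0] conjunct2[OF W0]
  define U where "U i = emb ` W i" for i
  have isd: "is_subspace_of_dim d r (W i)" if "i < p" for i using W(1) that by simp
  have sW: "subspace class_ring (W i) (module_vec TYPE(complex) d)" if "i < p" for i
    using isd[OF that] unfolding is_subspace_of_dim_def by (rule conjunct1)
  have dW: "vectorspace.dim class_ring ((module_vec TYPE(complex) d)\<lparr>carrier := W i\<rparr>) = r"
    if "i < p" for i
    using isd[OF that] unfolding is_subspace_of_dim_def by (rule conjunct2)
  have Wc: "W i \<subseteq> carrier_vec d" if "i < p" for i
    using submodule.subset[OF subspace.submod[OF sW[OF that]]] by (simp add: module_vec_simps)
  have props: "fv.dim (U i) = r \<and> fv.subspace (U i) \<and> U i \<subseteq> Vd d" if "i < p" for i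
    using jnf_dim_eq[OF sW[OF that]] dW[OF that] unfolding U_def by simp
  have "(\<Sum>i<p. fv.dim (U i)) \<le> q * d"
  proof (rule weighted[OF q pq])
    show "\<forall>i<p. fv.subspace (U i) \<and> U i \<subseteq> Vd d" using props by simp
    show "\<forall>i<p. \<forall>j<p. i \<noteq> j \<longrightarrow> q \<le> cyc_dist p i j \<longrightarrow> horth d (U i) (U j)"
    proof (intro allI impI)
      fix i j assume i: "i < p" and j: "j < p" and ne: "i \<noteq> j" and c: "q \<le> cyc_dist p i j"
      have "\<not> frac_adj p q i j" using c unfolding frac_adj_def by simp
      then have o: "orth_sets (W i) (W j)" using W(2) i j ne by auto
      show "horth d (U i) (U j)"
        unfolding horth_def U_def
      proof (intro ballI)
        fix x y assume "x \<in> emb ` W i" "y \<in> emb ` W j"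
        then obtain v w where v: "v \<in> W i" "x = emb v" and w: "w \<in> W j" "y = emb w" by blast
        have "herm_inner v w = 0" using o v w unfolding orth_sets_def by blast
        then show "hip d x y = 0" using herm_emb[of v d w] v w Wc[OF i] Wc[OF j] by auto
      qed
    qed
  qed
  moreover have "(\<Sum>i<p. fv.dim (U i)) = p * r" using props by simp
  ultimately show ?thesis by simp
qed

theorem lemma13:
  fixes p q :: nat
  assumes "q \<ge> 1" and "real p / real q \<ge> 2"
  shows "compl_proj_rank {0..<p} (frac_adj p q) = real p / real q"
proof -
  have q0: "real q > 0" using assms(1) by simp
  have "2 * real q \<le> real p" using assms(2) q0 by (simp add: le_divide_eq)
  then have pq: "2 * q \<le> p" by linarith
  let ?X = "{real d / real r | d r. d \<ge> 1 \<and> r \<ge> 1 \<and> compl_proj_rep {0..<p} (frac_adj p q) d r}"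
  have qp: "q \<le> p" using pq by simp
  have p1: "p \<ge> 1" using pq assms(1) by simp
  have mem: "real p / real q \<in> ?X"
  proof -
    have "p \<ge> 1 \<and> q \<ge> 1 \<and> compl_proj_rep {0..<p} (frac_adj p q) p q"
      using upper_rep[OF assms(1) qp] p1 assms(1) by simp
    then show ?thesis by blast
  qed
  have lb: "real p / real q \<le> x" if xX: "x \<in> ?X" for x
  proof -
    obtain d r where dr: "x = real d / real r" "d \<ge> 1" "r \<ge> 1"
      "compl_proj_rep {0..<p} (frac_adj p q) d r" using xX unfolding mem_Collect_eq by blast
    have "p * r \<le> q * d" using lower_bound[OF assms(1) pq dr(4)] .
    then have pr: "real p * real r \<le> real q * real d" by (metis of_nat_le_iff of_nat_mult)
    have r0: "real r > 0" using dr(3) by simp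
    have "real p / real q = (real p * real r) / (real q * real r)" using r0 by simp
    also have "\<dots> \<le> (real q * real d) / (real q * real r)"
      by (rule divide_right_mono[OF pr]) (use q0 r0 in simp)
    also have "\<dots> = real d / real r" using q0 by simp
    finally show ?thesis using dr(1) by simp
  qed
  show ?thesis unfolding compl_proj_rank_def by (rule cInf_eq_minimum[OF mem lb])
qed

end
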